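(* Let $n=p_1^{m_1}\cdots p_k^{m_k}$ with $m_i>1$ for at least one $i$. Then the adjacency spectrum (as a multiset) of $\mathcal E_{\mathbb Z_n}(\mathscr U)$ consists of the eigenvalue $0$ with multiplicity $T-m-(2^k-2)$ together with the $2^k-2$ eigenvalues of the symmetric matrix $C_A(\mathscr G)$ indexed by $V(\mathscr G)$, with entries $(C_A)_{II}=0$, $(C_A)_{IJ}=\sqrt{n_In_J}$ if $I\sim J$ in $\mathscr G$, and $(C_A)_{IJ}=0$ otherwise.
   Context: Primes $p_1<\dots<p_k$, positive integers $m_i$. Nonzero proper ideals of $\mathbb Z_n$ are uniquely $\langle p_1^{r_1}\cdots p_k^{r_k}\rangle$, $0\le r_i\le m_i$, $(r_i)\ne(0,\dots,0),(m_1,\dots,m_k)$; essential iff $r_j\ne m_j$ for all $j$. Essential ideal graph $\mathcal E_{\mathbb Z_n}$: vertices nonzero proper ideals, distinct $I,K$ adjacent iff $I+K$ essential. $T=\prod_i(m_i+1)-2$ is the number of vertices, $m=\prod_i m_i-1$ the number of essential nonzero proper ideals. $\mathscr U$ = nonzero proper nonessential ideals, $\mathcal E_{\mathbb Z_n}(\mathscr U)$ the induced subgraph. For $I\in\mathscr U$, $\Xi_I=\{i:r_i=m_i\}$; $[I]=\{J\in\mathscr U:\Xi_J=\Xi_I\}$. $\mathscr G$: vertex set the $2^k-2$ ideals $\langle\prod_{i\in S}p_i^{m_i}\rangle$, $S$ nonempty proper subset of $\{1,\dots,k\}$, $I\sim J$ iff $\Xi_I\cap\Xi_J=\emptyset$.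 For $I\in V(\mathscr G)$, $n_I=|[I]|=\prod_{i\notin\Xi_I}m_i$. *)

theory Defs
  imports Complex_Main "HOL-Computational_Algebra.Primes" "Jordan_Normal_Form.Char_Poly"
begin

definition zn_ideal :: "nat \<Rightarrow> nat set \<Rightarrow> bool" where
  "zn_ideal n I \<longleftrightarrow> I \<subseteq> {0..<n} \<and> 0 \<in> I \<and>
     (\<forall>a\<in>I. \<forall>b\<in>I. (a + b) mod n \<in> I) \<and>
     (\<forall>a\<in>I. (n - a) mod n \<in> I) \<and>
     (\<forall>a\<in>I. \<forall>r\<in>{0..<n}. (r * a) mod n \<in> I)"

definition zn_essential :: "nat \<Rightarrow> nat set \<Rightarrow> bool" where
  "zn_essential n I \<longleftrightarrow> zn_ideal n I \<and>
     (\<forall>K. zn_ideal n K \<and> K \<noteq> {0} \<longrightarrow> I \<inter> K \<noteq> {0})"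

definition zn_ideal_sum :: "nat \<Rightarrow> nat set \<Rightarrow> nat set \<Rightarrow> nat set" where
  "zn_ideal_sum n I K = {(a + b) mod n | a b. a \<in> I \<and> b \<in> K}"

definition ess_vertices :: "nat \<Rightarrow> nat set set" where
  "ess_vertices n = {I. zn_ideal n I \<and> I \<noteq> {0} \<and> I \<noteq> {0..<n}}"

definition noness_vertices :: "nat \<Rightarrow> nat set set" where
  "noness_vertices n = {I \<in> ess_vertices n. \<not> zn_essential n I}"

definition ess_adj :: "nat \<Rightarrow> nat set \<Rightarrow> nat set \<Rightarrow> bool" where
  "ess_adj n I K \<longleftrightarrow> I \<noteq> K \<and> zn_essential n (zn_ideal_sum n I K)"

definition index_mat :: "'v set \<Rightarrow> ('v \<Rightarrow> 'v \<Rightarrow> real) \<Rightarrow> complex mat" where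
  "index_mat V A = (let xs = (SOME xs. distinct xs \<and> set xs = V) in
     mat (card V) (card V) (\<lambda>(i,j). complex_of_real (A (xs ! i) (xs ! j))))"

definition mat_spectrum :: "'v set \<Rightarrow> ('v \<Rightarrow> 'v \<Rightarrow> real) \<Rightarrow> complex multiset" where
  "mat_spectrum V A = proots (char_poly (index_mat V A))"

text \<open>V(G) is indexed by the nonempty proper subsets S = Xi_I of {0..<k}.\<close>
definition G_vertices :: "nat \<Rightarrow> nat set set" where
  "G_vertices k = {S. S \<noteq> {} \<and> S \<subset> {..<k}}"

definition n_class :: "nat \<Rightarrow> (nat \<Rightarrow> nat) \<Rightarrow> nat set \<Rightarrow> nat" where
  "n_class k m S = (\<Prod>i\<in>{..<k} - S. m i)"

definition C_A :: "nat \<Rightarrow> (nat \<Rightarrow> nat) \<Rightarrow> nat set \<Rightarrow> nat set \<Rightarrow> real" where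
  "C_A k m S S' = (if S \<noteq> S' \<and> S \<inter> S' = {}
      then sqrt (real (n_class k m S * n_class k m S')) else 0)"

end

theory Submission
  imports Defs
begin

definition Idl :: "nat \<Rightarrow> nat \<Rightarrow> nat set" where
  "Idl n d = {x. x < n \<and> d dvd x}"

lemma Idl_ideal:
  assumes "d dvd n" "0 < n"
  shows "zn_ideal n (Idl n d)"
  unfolding zn_ideal_def Idl_def using assms
  by (auto simp: dvd_mod_iff intro!: dvd_diff_nat)

lemma ideal_Idl:
  assumes I: "zn_ideal n I" and n: "0 < n"
  shows "\<exists>d. d dvd n \<and> I = Idl n d"
proof (cases "I = {0}")
  case True
  have "Idl n n = {0}" unfolding Idl_def using n by (auto elim: dvdE)
  thus ?thesis using True by (intro exI[of _ n]) auto
next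
  case False
  have sub: "I \<subseteq> {0..<n}" and z: "0 \<in> I"
    and add: "\<And>a b. a \<in> I \<Longrightarrow> b \<in> I \<Longrightarrow> (a + b) mod n \<in> I"
    and neg: "\<And>a. a \<in> I \<Longrightarrow> (n - a) mod n \<in> I"
    and mul: "\<And>a r. a \<in> I \<Longrightarrow> r < n \<Longrightarrow> (r * a) mod n \<in> I"
    using I unfolding zn_ideal_def by auto
  obtain x where x: "x \<in> I" "x > 0" using False z by blast
  define d where "d = (LEAST x. x \<in> I \<and> x > 0)"
  have d: "d \<in> I" "d > 0" using LeastI[of "\<lambda>x. x \<in> I \<and> x > 0" x] x unfolding d_def by auto
  have dmin: "\<And>y. y \<in> I \<Longrightarrow> y > 0 \<Longrightarrow> d \<le> y" unfolding d_def by (rule Least_le) auto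
  have dn: "d < n" using d sub by auto
  have sub_mult: "(a - q * d) \<in> I" if a: "a \<in> I \<or> (a = n \<and> 0 < q * d)" "q * d \<le> a" "q * d < n" for a q
  proof -
    have "q \<le> q * d" using d(2) by simp
    hence q: "q < n" using that(3) by linarith
    have qd: "q * d \<in> I" using mul[OF d(1) q] that by simp
    have nq: "n - q * d \<in> I" if "0 < q * d"
      using neg[OF qd] that \<open>q * d < n\<close> by simp
    show ?thesis
    proof (cases "a = n")
      case True thus ?thesis using nq a(1) sub by fastforce
    next
      case False
      hence aI: "a \<in> I" "a < n" using that sub by auto
      show ?thesis
      proof (cases "q * d = 0")
        case True thus ?thesis using aI by (metis minus_nat.diff_0)
      next
        case False
        have "(a + (n - q * d)) mod n = a - q * d"
        proof -
          have "a + (n - q * d) = (a - q * d) + n" using that aI by simp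
          moreover have "(a - q * d + n) mod n = a - q * d" using aI by simp
          ultimately show ?thesis by (simp only:)
        qed
        thus ?thesis using add[OF aI(1) nq] False by simp
      qed
    qed
  qed
  have dvd_all: "d dvd a" if "a \<in> I \<or> a = n" for a
  proof -
    have an: "a \<le> n" using that sub by auto
    have le: "(a div d) * d \<le> a" by simp
    have "a mod d \<in> I"
    proof (cases "(a div d) * d < n")
      case True
      have "a \<in> I \<or> (a = n \<and> 0 < a div d * d)" using that dn d(2) by (auto simp: div_greater_zero_iff)
      thus ?thesis using sub_mult[OF _ le True] by (simp add: minus_div_mult_eq_mod)
    next
      case False
      hence "(a div d) * d = a" using le an by linarith
      hence "a mod d = 0" by (metis mod_mult_self2_is_0)
      thus ?thesis using z by simp
    qed
    moreover have "a mod d < d" using d(2) by simp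
    ultimately have "a mod d = 0" using dmin by fastforce
    thus ?thesis by auto
  qed
  have "I = Idl n d"
  proof
    show "I \<subseteq> Idl n d" unfolding Idl_def using dvd_all sub by auto
    show "Idl n d \<subseteq> I"
    proof
      fix y assume "y \<in> Idl n d"
      then obtain t where y: "y = d * t" "y < n" unfolding Idl_def by auto
      have "t \<le> d * t" using d(2) by simp
      hence "t < n" using y by linarith
      hence "(t * d) mod n \<in> I" by (rule mul[OF d(1)])
      thus "y \<in> I" using y by (simp add: mult.commute)
    qed
  qed
  thus ?thesis using dvd_all by blast
qed

lemma Idl_inj:
  assumes "0 < n" "d dvd n" "e dvd n" "Idl n d = Idl n e"
  shows "d = e"
proof -
  have *: "e dvd d" if "0 < n" "d dvd n" "e dvd n" "Idl n d = Idl n e" for d e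
  proof (cases "d = n")
    case True thus ?thesis using that by simp
  next
    case False
    hence "d < n" using that dvd_imp_le by fastforce
    hence "d \<in> Idl n d" unfolding Idl_def by auto
    thus ?thesis using that unfolding Idl_def by auto
  qed
  show ?thesis using *[OF assms] *[OF assms(1,3,2) assms(4)[symmetric]] by (metis dvd_antisym)
qed

lemma Idl_zero:
  assumes "0 < n" "d dvd n"
  shows "Idl n d = {0} \<longleftrightarrow> d = n"
proof
  assume h: "Idl n d = {0}"
  show "d = n"
  proof (rule ccontr)
    assume "d \<noteq> n"
    hence "d < n" "d > 0" using assms dvd_imp_le by (fastforce, auto intro: ccontr)
    hence "d \<in> Idl n d" unfolding Idl_def by auto
    thus False using h \<open>d > 0\<close> by auto
  qed
next
  assume "d = n"
  thus "Idl n d = {0}" unfolding Idl_def using assms by (auto elim!: dvdE)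
qed

lemma Idl_full:
  assumes "1 < n"
  shows "Idl n d = {0..<n} \<longleftrightarrow> d = 1"
proof
  assume "Idl n d = {0..<n}"
  hence "1 \<in> Idl n d" using assms by auto
  thus "d = 1" unfolding Idl_def by auto
qed (auto simp: Idl_def)

lemma Idl_sum:
  assumes n: "0 < n" and de: "d dvd n" "e dvd n" 
  shows "zn_ideal_sum n (Idl n d) (Idl n e) = Idl n (gcd d e)"
proof
  show "zn_ideal_sum n (Idl n d) (Idl n e) \<subseteq> Idl n (gcd d e)"
  proof
    fix z assume "z \<in> zn_ideal_sum n (Idl n d) (Idl n e)"
    then obtain a b where z: "z = (a + b) mod n" "d dvd a" "e dvd b" unfolding zn_ideal_sum_def Idl_def by auto
    have "gcd d e dvd a + b" using z by (meson dvd_add dvd_trans gcd_dvd1 gcd_dvd2)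
    moreover have "gcd d e dvd n" using de by (meson dvd_trans gcd_dvd1)
    ultimately show "z \<in> Idl n (gcd d e)" unfolding Idl_def using z n by (simp add: dvd_mod_iff)
  qed
  show "Idl n (gcd d e) \<subseteq> zn_ideal_sum n (Idl n d) (Idl n e)"
  proof
    fix x assume "x \<in> Idl n (gcd d e)"
    hence x0: "gcd d e dvd x" "x < n" unfolding Idl_def by auto
    then obtain t where "x = gcd d e * t" by (auto elim!: dvdE)
    hence x: "x = t * gcd d e" "x < n" using x0 by (auto simp: mult.commute)
    have "d \<noteq> 0" using de n by auto
    then obtain u v where uv: "d * u = e * v + gcd d e" using bezout_nat by blast
    define A where "A = (t * d * u) mod n"
    define y where "y = (t * e * v) mod n"
    define Bv where "Bv = (n - y) mod n"
    have A: "A \<in> Idl n d" unfolding A_def Idl_def using n by (simp add: dvd_mod_iff[OF de(1)])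
    have y: "y < n" "e dvd y" unfolding y_def using n by (simp_all add: dvd_mod_iff[OF de(2)])
    have "e dvd n - y" by (rule dvd_diff_nat[OF de(2) y(2)])
    hence Bv: "Bv \<in> Idl n e" unfolding Bv_def Idl_def using n by (simp add: dvd_mod_iff[OF de(2)])
    have "t * d * u = t * (d * u)" by (simp add: mult.assoc)
    also have "\<dots> = t * (e * v + gcd d e)" using uv by simp
    also have "\<dots> = t * e * v + x" using x(1) by (simp add: distrib_left mult.assoc)
    finally have "t * d * u = t * e * v + x" .
    hence "A = (y + x) mod n" unfolding A_def y_def mod_add_left_eq by (simp only:)
    hence "(A + Bv) mod n = ((y + x) + (n - y)) mod n" unfolding Bv_def by (simp only: mod_add_eq)
    also have "(y + x) + (n - y) = x + n" using y by simp
    also have "(x + n) mod n = x" using x by simp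
    finally have "(A + Bv) mod n = x" .
    thus "x \<in> zn_ideal_sum n (Idl n d) (Idl n e)" unfolding zn_ideal_sum_def using A Bv by blast
  qed
qed



locale pf =
  fixes k :: nat and p m :: "nat \<Rightarrow> nat" and n :: nat
  assumes primes: "\<forall>i<k. prime (p i)"
    and incr: "\<forall>i j. i < j \<and> j < k \<longrightarrow> p i < p j"
    and mpos: "\<forall>i<k. m i > 0"
    and n_def: "n = (\<Prod>i<k. p i ^ m i)"
begin

definition phi :: "(nat \<Rightarrow> nat) \<Rightarrow> nat" where "phi r = (\<Prod>i<k. p i ^ r i)"

lemma p_prime: "i < k \<Longrightarrow> prime (p i)" using primes by auto

lemma p_inj: "i < k \<Longrightarrow> j < k \<Longrightarrow> p i = p j \<Longrightarrow> i = j"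
  using incr by (metis less_irrefl nat_neq_iff)

lemma phi_pos: "phi r > 0"
  unfolding phi_def using p_prime by (auto intro!: prod_pos simp: prime_gt_0_nat)

lemma n_phi: "n = phi m" unfolding n_def phi_def ..

lemma n_pos: "n > 0" using phi_pos n_phi by simp

lemma mult_p_p: "i < k \<Longrightarrow> j < k \<Longrightarrow> multiplicity (p j) (p i ^ e) = (if i = j then e else 0)"
proof -
  assume ij: "i < k" "j < k"
  show ?thesis
  proof (cases "i = j")
    case True thus ?thesis using p_prime[OF ij(2)] by simp
  next
    case False
    hence "p j \<noteq> p i" using p_inj ij by metis
    hence "multiplicity (p j) (p i) = 0" using p_prime ij by (simp add: prime_multiplicity_other)
    moreover have "p i \<noteq> 0" using p_prime[OF ij(1)] by auto
    ultimately show ?thesis using False p_prime[OF ij(2)]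
      by (simp add: prime_elem_multiplicity_power_distrib)
  qed
qed

lemma mult_phi_p: "j < k \<Longrightarrow> multiplicity (p j) (phi r) = r j"
proof -
  assume j: "j < k"
  have "multiplicity (p j) (phi r) = (\<Sum>i<k. multiplicity (p j) (p i ^ r i))"
    unfolding phi_def using p_prime[OF j]
    by (intro prime_elem_multiplicity_prod_distrib) (auto dest: p_prime)
  also have "\<dots> = (\<Sum>i<k. if i = j then r i else 0)"
    by (rule sum.cong) (auto simp: mult_p_p j)
  also have "\<dots> = r j" using j by simp
  finally show ?thesis .
qed

lemma mult_phi_other:
  assumes q: "prime q" "\<forall>j<k. q \<noteq> p j"
  shows "multiplicity q (phi r) = 0"
proof -
  have "multiplicity q (phi r) = (\<Sum>i<k. multiplicity q (p i ^ r i))"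
    unfolding phi_def using q
    by (intro prime_elem_multiplicity_prod_distrib) (auto dest: p_prime)
  also have "\<dots> = 0"
  proof (rule sum.neutral, intro ballI)
    fix i assume "i \<in> {..<k}"
    hence i: "i < k" by simp
    have "multiplicity q (p i) = 0" using q i p_prime[OF i] by (metis prime_multiplicity_other)
    thus "multiplicity q (p i ^ r i) = 0" using q p_prime[OF i]
      by (simp add: prime_elem_multiplicity_power_distrib)
  qed
  finally show ?thesis .
qed

lemma dvd_phi:
  assumes "d \<noteq> 0" "\<And>j. j < k \<Longrightarrow> multiplicity (p j) d \<le> r j"
    "\<And>q. prime q \<Longrightarrow> \<forall>j<k. q \<noteq> p j \<Longrightarrow> multiplicity q d = 0"
  shows "d dvd phi r"
proof (rule multiplicity_le_imp_dvd[OF assms(1)])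
  fix q :: nat assume q: "prime q"
  show "multiplicity q d \<le> multiplicity q (phi r)"
  proof (cases "\<exists>j<k. q = p j")
    case True
    then obtain j where "j < k" "q = p j" by auto
    thus ?thesis using assms(2) mult_phi_p by simp
  next
    case False
    thus ?thesis using assms(3)[OF q] by auto
  qed
qed

lemma mult_dvd_n_other: "d dvd n \<Longrightarrow> prime q \<Longrightarrow> \<forall>j<k. q \<noteq> p j \<Longrightarrow> multiplicity q d = 0"
  using dvd_imp_multiplicity_le[of d n q] mult_phi_other[of q m] n_phi n_pos by auto

lemma mult_dvd_n_le: "d dvd n \<Longrightarrow> j < k \<Longrightarrow> multiplicity (p j) d \<le> m j"
  using dvd_imp_multiplicity_le[of d n "p j"] mult_phi_p[of j m] n_phi n_pos by auto

lemma dvd_n_phi: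
  assumes "d dvd n"
  shows "d = phi (\<lambda>i. multiplicity (p i) d)"
proof (rule dvd_antisym)
  have d0: "d \<noteq> 0" using assms n_pos by auto
  show "d dvd phi (\<lambda>i. multiplicity (p i) d)"
    by (rule dvd_phi[OF d0]) (use mult_dvd_n_other[OF assms] in auto)
  show "phi (\<lambda>i. multiplicity (p i) d) dvd d"
  proof (rule multiplicity_le_imp_dvd)
    show "phi (\<lambda>i. multiplicity (p i) d) \<noteq> 0" using phi_pos by simp
    fix q :: nat assume q: "prime q"
    show "multiplicity q (phi (\<lambda>i. multiplicity (p i) d)) \<le> multiplicity q d"
    proof (cases "\<exists>j<k. q = p j")
      case True
      then obtain j where "j < k" "q = p j" by auto
      thus ?thesis using mult_phi_p by simp
    next
      case False
      thus ?thesis using mult_phi_other[OF q] by auto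
    qed
  qed
qed

lemma all_full_imp_n: 
  assumes "d \<noteq> 0" "\<And>j. j < k \<Longrightarrow> m j \<le> multiplicity (p j) d"
  shows "n dvd d"
  unfolding n_phi
proof (rule multiplicity_le_imp_dvd)
  show "phi m \<noteq> 0" using phi_pos by simp
  fix q :: nat assume q: "prime q"
  show "multiplicity q (phi m) \<le> multiplicity q d"
  proof (cases "\<exists>j<k. q = p j")
    case True
    then obtain j where "j < k" "q = p j" by auto
    thus ?thesis using mult_phi_p assms by simp
  next
    case False
    thus ?thesis using mult_phi_other[OF q] by auto
  qed
qed

lemma dvd_n_div_p:
  assumes h: "h dvd n" and j: "j < k" and lt: "multiplicity (p j) h < m j"
  shows "h dvd n div p j"
proof -
  have pj: "prime (p j)" by (rule p_prime[OF j])
  have mn: "multiplicity (p j) n = m j" using mult_phi_p[OF j] n_phi by simp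
  have "p j ^ 1 dvd n" using mn mpos j by (intro multiplicity_dvd') auto
  hence "p j dvd n" by simp
  then obtain x where x: "n = p j * x" by auto
  have x0: "x \<noteq> 0" using x n_pos by auto
  have xd: "n div p j = x" using x pj by (simp add: prime_gt_0_nat)
  have h0: "h \<noteq> 0" using h n_pos by auto
  have mx: "multiplicity q n = multiplicity q (p j) + multiplicity q x" if "prime q" for q
    unfolding x using that pj x0 by (intro prime_elem_multiplicity_mult_distrib) auto
  show ?thesis unfolding xd
  proof (rule multiplicity_le_imp_dvd[OF h0])
    fix q :: nat assume q: "prime q"
    have le: "multiplicity q h \<le> multiplicity q n" using dvd_imp_multiplicity_le[OF h] n_pos by simp
    show "multiplicity q h \<le> multiplicity q x"
    proof (cases "q = p j")
      case True
      thus ?thesis using mx[OF q] mn lt pj by simp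
    next
      case False
      hence "multiplicity q (p j) = 0" using q pj by (simp add: prime_multiplicity_other)
      thus ?thesis using mx[OF q] le by simp
    qed
  qed
qed

lemma ess_iff:
  assumes g: "g dvd n"
  shows "zn_essential n (Idl n g) \<longleftrightarrow> (\<forall>j<k. multiplicity (p j) g < m j)"
proof
  assume ess: "zn_essential n (Idl n g)"
  show "\<forall>j<k. multiplicity (p j) g < m j"
  proof (rule ccontr)
    assume "\<not> (\<forall>j<k. multiplicity (p j) g < m j)"
    then obtain j where j: "j < k" "m j \<le> multiplicity (p j) g" by auto
    have pj: "prime (p j)" by (rule p_prime[OF j(1)])
    have pg: "p j ^ m j dvd g" using j by (simp add: multiplicity_dvd')
    hence pn: "p j ^ m j dvd n" using g by (rule dvd_trans)
    then obtain e where e: "n = p j ^ m j * e" by auto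
    have e0: "e \<noteq> 0" using e n_pos by auto
    have pm0: "p j ^ m j \<noteq> 0" using pj by auto
    have "multiplicity (p j) n = m j + multiplicity (p j) e"
      unfolding e using pj e0 pm0 by (simp add: prime_elem_multiplicity_mult_distrib)
    hence "multiplicity (p j) e = 0" using mult_phi_p[OF j(1)] n_phi by simp
    moreover have "\<not> is_unit (p j)" using pj by auto
    ultimately have "\<not> p j ^ 1 dvd e" using power_dvd_iff_le_multiplicity[OF e0, of "p j" 1] by simp
    hence "\<not> p j dvd e" by simp
    hence cop: "coprime (p j ^ m j) e" using pj by (metis prime_imp_power_coprime coprime_commute)
    have ed: "e dvd n" using e by simp
    have "p j ^ m j > 1" using pj mpos j(1) by (metis one_less_power prime_gt_1_nat)
    hence "e \<noteq> n" using e e0 by auto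
    hence K: "zn_ideal n (Idl n e) \<and> Idl n e \<noteq> {0}" using Idl_ideal[OF ed n_pos] Idl_zero[OF n_pos ed] by simp
    have "Idl n g \<inter> Idl n e = {0}"
    proof
      show "Idl n g \<inter> Idl n e \<subseteq> {0}"
      proof
        fix x assume x: "x \<in> Idl n g \<inter> Idl n e"
        hence gx: "g dvd x" and ex: "e dvd x" and xn: "x < n" unfolding Idl_def by auto
        have "p j ^ m j dvd x" using dvd_trans[OF pg gx] .
        hence "p j ^ m j * e dvd x" using cop ex by (simp add: divides_mult)
        hence "n dvd x" using e by simp
        thus "x \<in> {0}" using xn by (metis dvd_imp_le not_less singletonI gr0I)
      qed
      show "{0} \<subseteq> Idl n g \<inter> Idl n e" unfolding Idl_def using n_pos by auto
    qed
    thus False using ess K unfolding zn_essential_def by blast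
  qed
next
  assume all: "\<forall>j<k. multiplicity (p j) g < m j"
  show "zn_essential n (Idl n g)"
    unfolding zn_essential_def
  proof (intro conjI allI impI)
    show "zn_ideal n (Idl n g)" by (rule Idl_ideal[OF g n_pos])
    fix K assume K: "zn_ideal n K \<and> K \<noteq> {0}"
    from ideal_Idl[OF conjunct1[OF K] n_pos] obtain e where e: "e dvd n" "K = Idl n e" by blast
    have en: "e \<noteq> n" using conjunct2[OF K] Idl_zero[OF n_pos e(1)] e(2) by simp
    have e0: "e \<noteq> 0" using e(1) n_pos by (metis dvd_0_left_iff less_irrefl)
    have "\<exists>j<k. multiplicity (p j) e < m j"
    proof (rule ccontr)
      assume "\<not> (\<exists>j<k. multiplicity (p j) e < m j)"
      hence "\<And>j. j < k \<Longrightarrow> m j \<le> multiplicity (p j) e" by (meson not_le)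
      hence "n dvd e" by (rule all_full_imp_n[OF e0])
      hence "e = n" using e(1) by (metis dvd_antisym)
      thus False using en by contradiction
    qed
    then obtain j where j: "j < k" "multiplicity (p j) e < m j" by blast
    define x where "x = n div p j"
    have gx: "g dvd x" unfolding x_def using all j(1) by (intro dvd_n_div_p[OF g]) auto
    have ex: "e dvd x" unfolding x_def using dvd_n_div_p[OF e(1) j] .
    have pj: "prime (p j)" by (rule p_prime[OF j(1)])
    have "p j ^ 1 dvd n" using mult_phi_p[OF j(1), of m] n_phi mpos j(1) by (intro multiplicity_dvd') auto
    hence "p j dvd n" by simp
    then obtain y where y: "n = p j * y" by (rule dvdE)
    have pj1: "p j > 1" using pj by (rule prime_gt_1_nat)
    have xy: "x = y" unfolding x_def y using pj1 by simp
    have "y > 0" using y n_pos by (metis gr0I mult_0_right less_irrefl)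
    hence x0: "x \<noteq> 0" "x < n" using y xy pj1 by auto
    have xg: "x \<in> Idl n g" unfolding Idl_def using gx x0 by simp
    have "x \<in> Idl n e" unfolding Idl_def using ex x0 by simp
    hence "x \<in> K" using e(2) by simp
    hence "x \<in> Idl n g \<inter> K" using xg by simp
    show "Idl n g \<inter> K \<noteq> {0}"
    proof
      assume "Idl n g \<inter> K = {0}"
      hence "x = 0" using \<open>x \<in> Idl n g \<inter> K\<close> by blast
      thus False using x0(1) by contradiction
    qed
  qed
qed
end


lemma add_uminus_self_mat: "(A :: 'a :: group_add mat) \<in> carrier_mat r c \<Longrightarrow> A + - A = 0\<^sub>m r c"
  by (intro eq_matI) auto

lemma sylv:
  fixes N :: "'a::field mat" and C :: "'a mat"
  assumes N: "N \<in> carrier_mat a c" and C: "C \<in> carrier_mat c c"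
    and NN: "transpose_mat N * N = 1\<^sub>m c"
  shows "char_poly (N * C * transpose_mat N) * [:0,1:]^c = char_poly C * [:0,1:]^a"
proof -
  define h :: "'a mat \<Rightarrow> 'a poly mat" where "h = map_mat (\<lambda>x. [:x:])"
  define X :: "'a poly" where "X = [:0,1:]"
  define N' where "N' = h N"
  define C' where "C' = h C"
  define Nt' where "Nt' = h (transpose_mat N)"
  have Nt: "transpose_mat N \<in> carrier_mat c a" using N by auto
  have N': "N' \<in> carrier_mat a c" and C': "C' \<in> carrier_mat c c" and Nt': "Nt' \<in> carrier_mat c a"
    using N C by (auto simp: N'_def C'_def Nt'_def h_def)
  have hmult: "h (A * B) = h A * h B" if "A \<in> carrier_mat n1 n2" "B \<in> carrier_mat n2 n3" for A B :: "'a mat" and n1 n2 n3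
    unfolding h_def by (rule map_poly_mult(1)[OF that])
  have NtN': "Nt' * N' = 1\<^sub>m c"
  proof -
    have "Nt' * N' = h (transpose_mat N * N)" unfolding Nt'_def N'_def by (rule hmult[OF Nt N, symmetric])
    also have "\<dots> = 1\<^sub>m c" unfolding NN h_def by (rule eq_matI, auto)
    finally show ?thesis .
  qed
  have neg: "map_mat (\<lambda>x. [:- x:]) M = - h M" for M :: "'a mat"
    unfolding h_def by (rule eq_matI, auto)
  have cpA: "char_poly_matrix (N * C * transpose_mat N) = X \<cdot>\<^sub>m 1\<^sub>m a - N' * C' * Nt'"
  proof -
    have NC: "N * C \<in> carrier_mat a c" using N C by auto
    have "h (N * C * transpose_mat N) = N' * C' * Nt'"
      unfolding N'_def C'_def Nt'_def using hmult[OF NC Nt] hmult[OF N C] by simp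
    moreover have "N' * C' * Nt' \<in> carrier_mat a a" using N' C' Nt' by auto
    ultimately show ?thesis using N C unfolding char_poly_matrix_def neg X_def
      by (intro eq_matI) (auto simp: carrier_matD)
  qed
  have cpC: "char_poly_matrix C = X \<cdot>\<^sub>m 1\<^sub>m c - C'"
    using C C' unfolding char_poly_matrix_def neg X_def C'_def
    by (intro eq_matI) (auto simp: carrier_matD)
  define P where "P = four_block_mat (X \<cdot>\<^sub>m 1\<^sub>m a) (N' * C') Nt' (1\<^sub>m c)"
  define L where "L = four_block_mat (1\<^sub>m a) (- (N' * C')) (0\<^sub>m c a) (1\<^sub>m c)"
  define Q where "Q = four_block_mat (1\<^sub>m a) (0\<^sub>m a c) (- Nt') (X \<cdot>\<^sub>m 1\<^sub>m c)"
  have P: "P \<in> carrier_mat (a+c) (a+c)" unfolding P_def by auto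
  have L: "L \<in> carrier_mat (a+c) (a+c)" unfolding L_def by auto
  have Q: "Q \<in> carrier_mat (a+c) (a+c)" unfolding Q_def by auto
  have NC': "N' * C' \<in> carrier_mat a c" using N' C' by auto
  have NCN': "N' * C' * Nt' \<in> carrier_mat a a" using N' C' Nt' by auto
  have LP: "L * P = four_block_mat (X \<cdot>\<^sub>m 1\<^sub>m a - N' * C' * Nt') (0\<^sub>m a c) Nt' (1\<^sub>m c)"
  proof -
    have b1: "1\<^sub>m a * (X \<cdot>\<^sub>m 1\<^sub>m a) + - (N' * C') * Nt' = X \<cdot>\<^sub>m 1\<^sub>m a - N' * C' * Nt'"
    proof -
      have "- (N' * C') * Nt' = - (N' * C' * Nt')" using NC' Nt' by (intro uminus_mult_left_mat) auto
      thus ?thesis using NCN' by (simp only:) (intro eq_matI, auto simp: carrier_matD)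
    qed
    have b2: "1\<^sub>m a * (N' * C') + - (N' * C') * 1\<^sub>m c = 0\<^sub>m a c"
    proof -
      have "- (N' * C') * 1\<^sub>m c = - (N' * C')" using NC' by (subst uminus_mult_left_mat) auto
      moreover have "1\<^sub>m a * (N' * C') = N' * C'" by (rule left_mult_one_mat[OF NC'])
      ultimately show ?thesis using add_uminus_self_mat[OF NC'] by (simp only:)
    qed
    have b3: "0\<^sub>m c a * (X \<cdot>\<^sub>m 1\<^sub>m a) + 1\<^sub>m c * Nt' = Nt'"
      using Nt' by (intro eq_matI) (auto simp: carrier_matD)
    have b4: "0\<^sub>m c a * (N' * C') + 1\<^sub>m c * 1\<^sub>m c = 1\<^sub>m c"
      using left_mult_zero_mat[OF NC', of c] by simp
    have "L * P = four_block_mat (1\<^sub>m a * (X \<cdot>\<^sub>m 1\<^sub>m a) + - (N' * C') * Nt') (1\<^sub>m a * (N' * C') + - (N' * C') * 1\<^sub>m c)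
      (0\<^sub>m c a * (X \<cdot>\<^sub>m 1\<^sub>m a) + 1\<^sub>m c * Nt') (0\<^sub>m c a * (N' * C') + 1\<^sub>m c * 1\<^sub>m c)"
      unfolding L_def P_def by (rule mult_four_block_mat) (use NC' Nt' in auto)
    thus ?thesis by (simp only: b1 b2 b3 b4)
  qed
  have detL: "det L = 1" unfolding L_def
    using det_four_block_mat_lower_left_zero[of "1\<^sub>m a" a "- (N' * C')" c "0\<^sub>m c a" "1\<^sub>m c"] NC' by simp
  have detLP: "det (L * P) = char_poly (N * C * transpose_mat N)"
    unfolding LP char_poly_def cpA
    using det_four_block_mat_upper_right_zero[of "X \<cdot>\<^sub>m 1\<^sub>m a - N' * C' * Nt'" a "0\<^sub>m a c" c Nt' "1\<^sub>m c"] NCN' Nt' minus_carrier_mat[OF NCN'] by simp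
  have QP: "Q * P = four_block_mat (X \<cdot>\<^sub>m 1\<^sub>m a) (N' * C') (0\<^sub>m c a) (X \<cdot>\<^sub>m 1\<^sub>m c - C')"
  proof -
    have e3: "- Nt' * (X \<cdot>\<^sub>m 1\<^sub>m a) + X \<cdot>\<^sub>m 1\<^sub>m c * Nt' = 0\<^sub>m c a"
    proof -
      have "- Nt' * (X \<cdot>\<^sub>m 1\<^sub>m a) = - (Nt' * (X \<cdot>\<^sub>m 1\<^sub>m a))" using Nt' by (intro uminus_mult_left_mat) auto
      also have "Nt' * (X \<cdot>\<^sub>m 1\<^sub>m a) = X \<cdot>\<^sub>m Nt'" using mult_smult_distrib[OF Nt' one_carrier_mat[of a], of X] Nt' by simp
      finally have 1: "- Nt' * (X \<cdot>\<^sub>m 1\<^sub>m a) = - (X \<cdot>\<^sub>m Nt')" .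
      have 2: "X \<cdot>\<^sub>m 1\<^sub>m c * Nt' = X \<cdot>\<^sub>m Nt'" using mult_smult_assoc_mat[OF one_carrier_mat[of c] Nt', of X] Nt' by simp
      show ?thesis unfolding 1 2 using Nt' by (intro eq_matI) auto
    qed
    have e4: "- Nt' * (N' * C') + X \<cdot>\<^sub>m 1\<^sub>m c * 1\<^sub>m c = X \<cdot>\<^sub>m 1\<^sub>m c - C'"
    proof -
      have "Nt' * (N' * C') = C'" using assoc_mult_mat[OF Nt' N' C'] NtN' C' by simp
      moreover have "- Nt' * (N' * C') = - (Nt' * (N' * C'))" using Nt' NC' by (intro uminus_mult_left_mat) auto
      ultimately show ?thesis using C' by (simp only:) (intro eq_matI, auto)
    qed
    have b1: "1\<^sub>m a * (X \<cdot>\<^sub>m 1\<^sub>m a) + 0\<^sub>m a c * Nt' = X \<cdot>\<^sub>m 1\<^sub>m a"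
      using Nt' by (intro eq_matI) (auto simp: carrier_matD)
    have b2: "1\<^sub>m a * (N' * C') + 0\<^sub>m a c * 1\<^sub>m c = N' * C'"
      using NC' left_mult_one_mat[OF NC'] by simp
    have "Q * P = four_block_mat (1\<^sub>m a * (X \<cdot>\<^sub>m 1\<^sub>m a) + 0\<^sub>m a c * Nt') (1\<^sub>m a * (N' * C') + 0\<^sub>m a c * 1\<^sub>m c)
      (- Nt' * (X \<cdot>\<^sub>m 1\<^sub>m a) + X \<cdot>\<^sub>m 1\<^sub>m c * Nt') (- Nt' * (N' * C') + X \<cdot>\<^sub>m 1\<^sub>m c * 1\<^sub>m c)"
      unfolding Q_def P_def by (rule mult_four_block_mat) (use NC' Nt' in auto)
    thus ?thesis by (simp only: b1 b2 e3 e4)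
  qed
  have detQ: "det Q = X ^ c" unfolding Q_def
    using det_four_block_mat_upper_right_zero[of "1\<^sub>m a" a "0\<^sub>m a c" c "- Nt'" "X \<cdot>\<^sub>m 1\<^sub>m c"] Nt' by (simp add: det_smult)
  have detQP: "det (Q * P) = X ^ a * char_poly C"
    unfolding QP char_poly_def cpC
    using det_four_block_mat_lower_left_zero[of "X \<cdot>\<^sub>m 1\<^sub>m a" a "N' * C'" c "0\<^sub>m c a" "X \<cdot>\<^sub>m 1\<^sub>m c - C'"] NC' C' minus_carrier_mat[OF C'] by (simp add: det_smult)
  have "det P = char_poly (N * C * transpose_mat N)"
    using detLP det_mult[OF L P] detL by simp
  moreover have "X ^ c * det P = X ^ a * char_poly C"
    using detQP det_mult[OF Q P] detQ by simp
  ultimately show ?thesis unfolding X_def by (simp add: ac_simps)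
qed
lemma index_mat_cong:
  assumes "finite V" "\<And>v v'. v \<in> V \<Longrightarrow> v' \<in> V \<Longrightarrow> A v v' = A' v v'"
  shows "index_mat V A = index_mat V A'"
proof -
  define xs where "xs = (SOME xs. distinct xs \<and> set xs = V)"
  have "distinct xs \<and> set xs = V" unfolding xs_def
    by (rule someI_ex) (use finite_distinct_list[OF assms(1)] in auto)
  hence xs: "distinct xs" "set xs = V" by auto
  have len: "length xs = card V" using distinct_card xs by metis
  show ?thesis unfolding index_mat_def Let_def xs_def[symmetric]
    by (rule eq_matI) (auto intro!: assms(2) simp: len[symmetric] xs(2)[symmetric] distinct_card[OF xs(1)])
qed

lemma count_nth:
  assumes "distinct xs"
  shows "card {i. i < length xs \<and> P (xs ! i)} = card {x \<in> set xs. P x}"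
proof -
  have "bij_betw (\<lambda>i. xs ! i) {i. i < length xs \<and> P (xs ! i)} {x \<in> set xs. P x}"
    unfolding bij_betw_def using assms
    by (auto simp: inj_on_def nth_eq_iff_index_eq in_set_conv_nth image_def)
  thus ?thesis by (rule bij_betw_same_card)
qed

lemma blowup:
  fixes V :: "'v set" and W :: "'w set" and f :: "'v \<Rightarrow> 'w" and B :: "'w \<Rightarrow> 'w \<Rightarrow> real"
    and c :: "'w \<Rightarrow> nat"
  assumes finV: "finite V" and finW: "finite W" and fVW: "\<And>v. v \<in> V \<Longrightarrow> f v \<in> W"
    and cdef: "\<And>w. w \<in> W \<Longrightarrow> c w = card {v \<in> V. f v = w}"
    and cpos: "\<And>w. w \<in> W \<Longrightarrow> c w > 0"
  shows "char_poly (index_mat V (\<lambda>v v'. B (f v) (f v'))) * [:0,1:]^card W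
       = char_poly (index_mat W (\<lambda>w w'. B w w' * sqrt (real (c w * c w')))) * [:0,1:]^card V"
proof -
  define xs where "xs = (SOME xs. distinct xs \<and> set xs = V)"
  have "distinct xs \<and> set xs = V" unfolding xs_def
    by (rule someI_ex) (use finite_distinct_list[OF finV] in auto)
  hence xs: "distinct xs" "set xs = V" by auto
  define ys where "ys = (SOME xs. distinct xs \<and> set xs = W)"
  have "distinct ys \<and> set ys = W" unfolding ys_def
    by (rule someI_ex) (use finite_distinct_list[OF finW] in auto)
  hence ys: "distinct ys" "set ys = W" by auto
  define a where "a = card V"
  define b where "b = card W"
  have la: "length xs = a" using distinct_card xs a_def by metis
  have lb: "length ys = b" using distinct_card ys b_def by metis
  have AV: "index_mat V (\<lambda>v v'. B (f v) (f v')) = mat a a (\<lambda>(i,j). complex_of_real (B (f (xs ! i)) (f (xs ! j))))"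
    unfolding index_mat_def Let_def xs_def[symmetric] a_def by simp
  define Cm where "Cm = index_mat W (\<lambda>w w'. B w w' * sqrt (real (c w * c w')))"
  have Cm: "Cm = mat b b (\<lambda>(i,j). complex_of_real (B (ys ! i) (ys ! j) * sqrt (real (c (ys ! i) * c (ys ! j)))))"
    unfolding Cm_def index_mat_def Let_def ys_def[symmetric] b_def by simp
  define N :: "complex mat" where "N = mat a b (\<lambda>(i,j). if f (xs ! i) = ys ! j then complex_of_real (1 / sqrt (real (c (ys ! j)))) else 0)"
  have Nc: "N \<in> carrier_mat a b" unfolding N_def by simp
  have Cc: "Cm \<in> carrier_mat b b" unfolding Cm by simp
  have xsV: "i < a \<Longrightarrow> xs ! i \<in> V" for i using xs(2) la nth_mem by blast
  have ysW: "j < b \<Longrightarrow> ys ! j \<in> W" for j using ys(2) lb nth_mem by blast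
  define J where "J i = (THE j. j < b \<and> ys ! j = f (xs ! i))" for i
  have J: "J i < b \<and> ys ! J i = f (xs ! i)" if "i < a" for i
  proof -
    have "f (xs ! i) \<in> set ys" using fVW[OF xsV[OF that]] ys(2) by simp
    then obtain j where j: "j < b" "ys ! j = f (xs ! i)" using lb by (auto simp: in_set_conv_nth)
    have "\<exists>!j. j < b \<and> ys ! j = f (xs ! i)"
      using j ys(1) lb by (metis nth_eq_iff_index_eq)
    thus ?thesis unfolding J_def by (rule theI')
  qed
  have Jiff: "j < b \<Longrightarrow> i < a \<Longrightarrow> (f (xs ! i) = ys ! j) \<longleftrightarrow> j = J i" for i j
    using J ys(1) lb by (metis nth_eq_iff_index_eq)
  have NtN: "transpose_mat N * N = 1\<^sub>m b"
  proof (rule eq_matI)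
    fix j j' assume jj: "j < dim_row (1\<^sub>m b)" "j' < dim_col (1\<^sub>m b)"
    hence j: "j < b" "j' < b" by auto
    have "(transpose_mat N * N) $$ (j, j') = (\<Sum>i<a. N $$ (i, j) * N $$ (i, j'))"
      using j Nc by (simp add: scalar_prod_def lessThan_atLeast0)
    also have "\<dots> = 1\<^sub>m b $$ (j, j')"
    proof (cases "j = j'")
      case False
      have "N $$ (i, j) * N $$ (i, j') = 0" if "i < a" for i
        using Jiff[OF j(1) that] Jiff[OF j(2) that] False j that by (simp add: N_def)
      hence "(\<Sum>i<a. N $$ (i, j) * N $$ (i, j')) = 0"
        by (intro sum.neutral) (metis lessThan_iff mult_eq_0_iff)
      thus ?thesis using False j by simp
    next
      case True
      define w where "w = ys ! j"
      have w: "w \<in> W" using ysW j unfolding w_def by auto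
      have "(\<Sum>i<a. N $$ (i, j) * N $$ (i, j')) = (\<Sum>i\<in>{i. i < a \<and> f (xs ! i) = w}. complex_of_real (1 / real (c w)))"
      proof -
        have sq: "complex_of_real (1 / sqrt (real x)) * complex_of_real (1 / sqrt (real x)) = complex_of_real (1 / real x)" for x :: nat
        proof -
          have "(1 / sqrt (real x)) * (1 / sqrt (real x)) = 1 / real x" by (simp add: real_sqrt_mult_self)
          thus ?thesis by (metis of_real_mult)
        qed
        have sq2: "complex_of_real (sqrt (real x)) * complex_of_real (sqrt (real x)) = of_nat x" for x :: nat
          by (metis of_real_mult of_real_of_nat_eq real_sqrt_mult_self abs_of_nat)
        show ?thesis
          unfolding True by (rule sum.mono_neutral_cong_right) (auto simp: N_def w_def[symmetric] True[symmetric] j sq sq2)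
      qed
      also have "\<dots> = of_nat (card {i. i < a \<and> f (xs ! i) = w}) * complex_of_real (1 / real (c w))" by simp
      also have "card {i. i < a \<and> f (xs ! i) = w} = c w"
        using count_nth[OF xs(1), of "\<lambda>v. f v = w"] cdef[OF w] xs(2) la by simp
      also have "of_nat (c w) * complex_of_real (1 / real (c w)) = 1"
        using cpos[OF w] by (simp add: field_simps)
      finally show ?thesis using True j by simp
    qed
    finally show "(transpose_mat N * N) $$ (j, j') = 1\<^sub>m b $$ (j, j')" .
  qed (use Nc in auto)
  have NCN: "N * Cm * transpose_mat N = index_mat V (\<lambda>v v'. B (f v) (f v'))"
  proof (rule eq_matI)
    fix i i' assume ii: "i < dim_row (index_mat V (\<lambda>v v'. B (f v) (f v')))" "i' < dim_col (index_mat V (\<lambda>v v'. B (f v) (f v')))"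
    hence i: "i < a" "i' < a" unfolding AV by auto
    have row: "(N * Cm) $$ (i, j') = complex_of_real (1 / sqrt (real (c (ys ! J i)))) * Cm $$ (J i, j')" if "j' < b" for j'
    proof -
      have "(N * Cm) $$ (i, j') = (\<Sum>j<b. N $$ (i, j) * Cm $$ (j, j'))"
        using i that Nc Cc by (simp add: scalar_prod_def lessThan_atLeast0)
      also have "\<dots> = (\<Sum>j<b. if j = J i then complex_of_real (1 / sqrt (real (c (ys ! J i)))) * Cm $$ (J i, j') else 0)"
        by (rule sum.cong) (auto simp: N_def Jiff i)
      also have "\<dots> = complex_of_real (1 / sqrt (real (c (ys ! J i)))) * Cm $$ (J i, j')"
        using J[OF i(1)] by simp
      finally show ?thesis .
    qed
    have "(N * Cm * transpose_mat N) $$ (i, i') = (\<Sum>j'<b. (N * Cm) $$ (i, j') * N $$ (i', j'))"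
      using i Nc Cc by (simp add: scalar_prod_def lessThan_atLeast0 del: assoc_mult_mat)
    also have "\<dots> = (\<Sum>j'<b. if j' = J i' then complex_of_real (1 / sqrt (real (c (ys ! J i)))) * Cm $$ (J i, J i') * complex_of_real (1 / sqrt (real (c (ys ! J i')))) else 0)"
    proof (rule sum.cong[OF refl])
      fix j' assume "j' \<in> {..<b}"
      hence j': "j' < b" by simp
      show "(N * Cm) $$ (i, j') * N $$ (i', j') = (if j' = J i' then complex_of_real (1 / sqrt (real (c (ys ! J i)))) * Cm $$ (J i, J i') * complex_of_real (1 / sqrt (real (c (ys ! J i')))) else 0)"
        unfolding row[OF j'] using j' i by (auto simp: N_def Jiff)
    qed
    also have "\<dots> = complex_of_real (1 / sqrt (real (c (ys ! J i)))) * Cm $$ (J i, J i') * complex_of_real (1 / sqrt (real (c (ys ! J i'))))"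
      using J[OF i(2)] by simp
    also have "\<dots> = complex_of_real (B (f (xs ! i)) (f (xs ! i')))"
    proof -
      have c1: "c (ys ! J i) > 0" "c (ys ! J i') > 0" using cpos ysW J i by metis+
      have "Cm $$ (J i, J i') = complex_of_real (B (f (xs ! i)) (f (xs ! i')) * sqrt (real (c (ys ! J i))) * sqrt (real (c (ys ! J i'))))"
        unfolding Cm using J i by (simp add: real_sqrt_mult)
      thus ?thesis using c1 by (simp add: field_simps)
    qed
    also have "\<dots> = index_mat V (\<lambda>v v'. B (f v) (f v')) $$ (i, i')" unfolding AV using i by simp
    finally show "(N * Cm * transpose_mat N) $$ (i, i') = index_mat V (\<lambda>v v'. B (f v) (f v')) $$ (i, i')" .
  qed (auto simp: AV N_def Cm)
  have "char_poly (N * Cm * transpose_mat N) * [:0,1:]^b = char_poly Cm * [:0,1:]^a" by (rule sylv[OF Nc Cc NtN])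
  hence "char_poly (index_mat V (\<lambda>v v'. B (f v) (f v'))) * [:0,1:]^b = char_poly Cm * [:0,1:]^a" by (simp only: NCN)
  thus ?thesis unfolding Cm_def a_def b_def .
qed



context pf
begin

definition Xi :: "nat set \<Rightarrow> nat set" where
  "Xi I = {j. j < k \<and> (\<forall>x\<in>I. p j ^ m j dvd x)}"

lemma full_iff: "d dvd n \<Longrightarrow> j < k \<Longrightarrow> p j ^ m j dvd d \<longleftrightarrow> m j \<le> multiplicity (p j) d"
proof -
  assume d: "d dvd n" and j: "j < k"
  have "d \<noteq> 0" using d n_pos by (metis dvd_0_left_iff less_irrefl)
  moreover have "\<not> is_unit (p j)" using p_prime[OF j] by auto
  ultimately show ?thesis by (rule power_dvd_iff_le_multiplicity)
qed

lemma Xi_Idl: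
  assumes d: "d dvd n"
  shows "Xi (Idl n d) = {j. j < k \<and> m j \<le> multiplicity (p j) d}"
proof -
  have "(\<forall>x\<in>Idl n d. p j ^ m j dvd x) \<longleftrightarrow> p j ^ m j dvd d" if j: "j < k" for j
  proof
    assume h: "\<forall>x\<in>Idl n d. p j ^ m j dvd x"
    show "p j ^ m j dvd d"
    proof (cases "d = n")
      case True
      have "multiplicity (p j) n = m j" using mult_phi_p[OF j] n_phi by simp
      thus ?thesis using True by (intro multiplicity_dvd') simp
    next
      case False
      hence "d < n" using d n_pos dvd_imp_le le_neq_implies_less by blast
      hence "d \<in> Idl n d" unfolding Idl_def by simp
      thus ?thesis using h by blast
    qed
  next
    assume "p j ^ m j dvd d"
    thus "\<forall>x\<in>Idl n d. p j ^ m j dvd x" unfolding Idl_def using dvd_trans by blast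
  qed
  thus ?thesis unfolding Xi_def using full_iff[OF d] by auto
qed

lemma V_char:
  assumes n1: "1 < n"
  shows "I \<in> noness_vertices n \<longleftrightarrow>
    (\<exists>d. d dvd n \<and> d \<noteq> n \<and> d \<noteq> 1 \<and> I = Idl n d \<and> (\<exists>j<k. m j \<le> multiplicity (p j) d))"
proof
  assume I: "I \<in> noness_vertices n"
  hence ideal: "zn_ideal n I" and nz: "I \<noteq> {0}" and nf: "I \<noteq> {0..<n}" and ne: "\<not> zn_essential n I"
    unfolding noness_vertices_def ess_vertices_def by auto
  obtain d where d: "d dvd n" "I = Idl n d" using ideal_Idl[OF ideal n_pos] by blast
  have "d \<noteq> n" using nz d Idl_zero[OF n_pos d(1)] by simp
  moreover have "d \<noteq> 1" using nf d Idl_full[OF n1] by simp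
  moreover have "\<exists>j<k. m j \<le> multiplicity (p j) d" using ne d ess_iff[OF d(1)] by (auto simp: not_less)
  ultimately show "\<exists>d. d dvd n \<and> d \<noteq> n \<and> d \<noteq> 1 \<and> I = Idl n d \<and> (\<exists>j<k. m j \<le> multiplicity (p j) d)"
    using d by blast
next
  assume "\<exists>d. d dvd n \<and> d \<noteq> n \<and> d \<noteq> 1 \<and> I = Idl n d \<and> (\<exists>j<k. m j \<le> multiplicity (p j) d)"
  then obtain d where d: "d dvd n" "d \<noteq> n" "d \<noteq> 1" "I = Idl n d" and j: "\<exists>j<k. m j \<le> multiplicity (p j) d" by blast
  have "zn_ideal n I" using Idl_ideal[OF d(1) n_pos] d(4) by simp
  moreover have "I \<noteq> {0}" using d Idl_zero[OF n_pos d(1)] by simp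
  moreover have "I \<noteq> {0..<n}" using d Idl_full[OF n1] by simp
  moreover have "\<not> zn_essential n I" using d(4) ess_iff[OF d(1)] j by (auto simp: not_less)
  ultimately show "I \<in> noness_vertices n" unfolding noness_vertices_def ess_vertices_def by simp
qed

lemma Xi_W:
  assumes n1: "1 < n" and I: "I \<in> noness_vertices n"
  shows "Xi I \<in> G_vertices k"
proof -
  obtain d where d: "d dvd n" "d \<noteq> n" "d \<noteq> 1" "I = Idl n d" and j: "\<exists>j<k. m j \<le> multiplicity (p j) d"
    using I V_char[OF n1] by blast
  have X: "Xi I = {j. j < k \<and> m j \<le> multiplicity (p j) d}" using Xi_Idl[OF d(1)] d(4) by simp
  have "Xi I \<noteq> {}" using X j by auto
  moreover have "Xi I \<noteq> {..<k}"
  proof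
    assume "Xi I = {..<k}"
    hence "\<And>j. j < k \<Longrightarrow> m j \<le> multiplicity (p j) d" using X by auto
    moreover have "d \<noteq> 0" using d(1) n_pos by (metis dvd_0_left_iff less_irrefl)
    ultimately have "n dvd d" using all_full_imp_n by blast
    thus False using d(1,2) by (metis dvd_antisym)
  qed
  moreover have "Xi I \<subseteq> {..<k}" using X by auto
  ultimately show ?thesis unfolding G_vertices_def by auto
qed

lemma adj_iff:
  assumes n1: "1 < n" and I: "I \<in> noness_vertices n" and K: "K \<in> noness_vertices n"
  shows "ess_adj n I K \<longleftrightarrow> Xi I \<inter> Xi K = {}"
proof -
  obtain d where d: "d dvd n" "I = Idl n d" using I V_char[OF n1] by blast
  obtain e where e: "e dvd n" "K = Idl n e" using K V_char[OF n1] by blast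
  have g: "gcd d e dvd n" using d(1) by (meson dvd_trans gcd_dvd1)
  have sum: "zn_ideal_sum n I K = Idl n (gcd d e)" using Idl_sum[OF n_pos d(1) e(1)] d e by simp
  have "zn_essential n (zn_ideal_sum n I K) \<longleftrightarrow> (\<forall>j<k. \<not> m j \<le> multiplicity (p j) (gcd d e))"
    unfolding sum ess_iff[OF g] by (auto simp: not_le)
  also have "\<dots> \<longleftrightarrow> (\<forall>j<k. \<not> (m j \<le> multiplicity (p j) d \<and> m j \<le> multiplicity (p j) e))"
  proof -
    have "m j \<le> multiplicity (p j) (gcd d e) \<longleftrightarrow> (m j \<le> multiplicity (p j) d \<and> m j \<le> multiplicity (p j) e)"
      if j: "j < k" for j
      using full_iff[OF g j] full_iff[OF d(1) j] full_iff[OF e(1) j] gcd_greatest_iff[of "p j ^ m j" d e] by simp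
    thus ?thesis by auto
  qed
  also have "\<dots> \<longleftrightarrow> Xi I \<inter> Xi K = {}"
    unfolding d(2) e(2) Xi_Idl[OF d(1)] Xi_Idl[OF e(1)] by auto
  finally have ess: "zn_essential n (zn_ideal_sum n I K) \<longleftrightarrow> Xi I \<inter> Xi K = {}" .
  have "Xi I \<noteq> {}" using Xi_W[OF n1 I] unfolding G_vertices_def by auto
  hence "Xi I \<inter> Xi K = {} \<Longrightarrow> I \<noteq> K" by auto
  thus ?thesis unfolding ess_adj_def using ess by auto
qed

end


context pf
begin

lemma fiber:
  assumes n1: "1 < n" and S: "S \<in> G_vertices k"
  shows "card {I \<in> noness_vertices n. Xi I = S} = n_class k m S"
proof -
  have Sk: "S \<subseteq> {..<k}" "S \<noteq> {}" "S \<noteq> {..<k}" using S unfolding G_vertices_def by (simp_all add: psubset_eq)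
  define P where "P = PiE {..<k} (\<lambda>i. if i \<in> S then {m i} else {0..<m i})"
  define g where "g r = Idl n (phi r)" for r
  have rP: "r i \<le> m i \<and> (i \<in> S \<longleftrightarrow> m i \<le> r i)" if "r \<in> P" "i < k" for r i
  proof -
    have "r i \<in> (if i \<in> S then {m i} else {0..<m i})"
      using PiE_mem[of r "{..<k}" "\<lambda>i. if i \<in> S then {m i} else {0..<m i}" i] that unfolding P_def by blast
    thus ?thesis by (cases "i \<in> S") auto
  qed
  have phidvd: "phi r dvd n" if "r \<in> P" for r
    unfolding n_phi phi_def by (rule prod_dvd_prod) (use le_imp_power_dvd rP[OF that] in auto)
  have inj: "inj_on g P"
  proof (rule inj_onI)
    fix r s assume r: "r \<in> P" and s: "s \<in> P" and eq: "g r = g s"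
    have "phi r = phi s" using Idl_inj[OF n_pos phidvd[OF r] phidvd[OF s]] eq unfolding g_def .
    hence "r j = s j" if "j < k" for j using mult_phi_p[OF that, of r] mult_phi_p[OF that, of s] by simp
    thus "r = s" using r s unfolding P_def by (intro PiE_ext) auto
  qed
  have img1: "g r \<in> {I \<in> noness_vertices n. Xi I = S}" if r: "r \<in> P" for r
  proof -
    obtain i where i: "i < k" "i \<notin> S" using Sk by auto
    obtain j where j: "j \<in> S" using Sk by auto
    have jk: "j < k" using j Sk by auto
    have "multiplicity (p i) (phi r) = r i" using mult_phi_p[OF i(1)] .
    moreover have "r i < m i" using rP[OF r i(1)] i(2) by auto
    moreover have "multiplicity (p i) n = m i" using mult_phi_p[OF i(1)] n_phi by simp
    ultimately have dn: "phi r \<noteq> n" by auto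
    have mj: "multiplicity (p j) (phi r) = m j" using mult_phi_p[OF jk, of r] rP[OF r jk] j by simp
    have "m j > 0" using mpos jk by auto
    hence d1: "phi r \<noteq> 1" using mj by auto
    have "g r \<in> noness_vertices n" unfolding V_char[OF n1] g_def
      using phidvd[OF r] dn d1 mj jk by (intro exI[of _ "phi r"]) auto
    moreover have "Xi (g r) = S" unfolding g_def Xi_Idl[OF phidvd[OF r]]
      using mult_phi_p rP[OF r] Sk by auto
    ultimately show ?thesis by simp
  qed
  have img2: "I \<in> g ` P" if I: "I \<in> noness_vertices n" "Xi I = S" for I
  proof -
    obtain d where d: "d dvd n" "I = Idl n d" using I(1) V_char[OF n1] by blast
    define r where "r = restrict (\<lambda>i. multiplicity (p i) d) {..<k}"
    have X: "Xi I = {j. j < k \<and> m j \<le> multiplicity (p j) d}" using Xi_Idl[OF d(1)] d(2) by simp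
    have "r \<in> P" unfolding P_def r_def
    proof (rule restrict_PiE_iff[THEN iffD2], intro ballI)
      fix i assume "i \<in> {..<k}"
      hence i: "i < k" by simp
      have le: "multiplicity (p i) d \<le> m i" by (rule mult_dvd_n_le[OF d(1) i])
      show "multiplicity (p i) d \<in> (if i \<in> S then {m i} else {0..<m i})"
        using le X I(2) i by auto
    qed
    moreover have "phi r = d"
    proof -
      have "phi r = phi (\<lambda>i. multiplicity (p i) d)" unfolding phi_def r_def by (rule prod.cong) auto
      thus ?thesis using dvd_n_phi[OF d(1)] by simp
    qed
    ultimately show ?thesis unfolding g_def using d(2) by blast
  qed
  have bij: "bij_betw g P {I \<in> noness_vertices n. Xi I = S}"
    unfolding bij_betw_def using inj img1 img2 by blast
  have "card {I \<in> noness_vertices n. Xi I = S} = card P" using bij_betw_same_card[OF bij] by simp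
  also have "\<dots> = (\<Prod>i<k. card (if i \<in> S then {m i} else {0..<m i}))" unfolding P_def by (rule card_PiE) simp
  also have "\<dots> = (\<Prod>i<k. if i \<in> S then 1 else m i)" by (rule prod.cong) auto
  also have "\<dots> = (\<Prod>i\<in>{..<k} - S. m i)"
    by (subst prod.If_cases) (auto simp: Diff_eq)
  finally show ?thesis unfolding n_class_def .
qed


lemma finite_V: "finite (noness_vertices n)"
proof (rule finite_subset)
  show "noness_vertices n \<subseteq> Pow {0..<n}"
    unfolding noness_vertices_def ess_vertices_def zn_ideal_def by auto
qed simp

lemma finite_W: "finite (G_vertices k)"
  by (rule finite_subset[of _ "Pow {..<k}"]) (auto simp: G_vertices_def)

lemma n_class_pos: "n_class k m S > 0"
  unfolding n_class_def using mpos by (intro prod_pos) auto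

lemma card_V:
  assumes n1: "1 < n"
  shows "card (noness_vertices n) = (\<Sum>S\<in>G_vertices k. n_class k m S)"
proof -
  have eq: "noness_vertices n = (\<Union>S\<in>G_vertices k. {I \<in> noness_vertices n. Xi I = S})"
    using Xi_W[OF n1] by blast
  have "card (\<Union>S\<in>G_vertices k. {I \<in> noness_vertices n. Xi I = S}) = (\<Sum>S\<in>G_vertices k. card {I \<in> noness_vertices n. Xi I = S})"
    by (rule card_UN_disjoint) (use finite_W finite_V in auto)
  also have "\<dots> = (\<Sum>S\<in>G_vertices k. n_class k m S)" by (rule sum.cong) (auto simp: fiber[OF n1])
  finally show ?thesis using eq by simp
qed

lemma Pow_split:
  assumes k: "k \<ge> 1"
  shows "Pow {..<k} = insert {} (insert {..<k} (G_vertices k))"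
    and "{} \<notin> insert {..<k} (G_vertices k)" and "{..<k} \<notin> G_vertices k"
proof -
  show "Pow {..<k} = insert {} (insert {..<k} (G_vertices k))" unfolding G_vertices_def by auto
  have "0 \<in> {..<k}" using k by simp
  hence "{..<k} \<noteq> ({} :: nat set)" by blast
  thus "{} \<notin> insert {..<k} (G_vertices k)" unfolding G_vertices_def by auto
  show "{..<k} \<notin> G_vertices k" unfolding G_vertices_def by auto
qed

lemma sum_W:
  assumes k: "k \<ge> 1"
  shows "(\<Sum>S\<in>G_vertices k. n_class k m S) + (\<Prod>i<k. m i) + 1 = (\<Prod>i<k. m i + 1)"
proof -
  have "(\<Prod>i<k. m i + 1) = (\<Prod>i<k. 1 + m i)" by (simp add: add.commute)
  also have "\<dots> = (\<Sum>X\<in>Pow {..<k}. (\<Prod>i\<in>X. 1) * (\<Prod>i\<in>{..<k} - X. m i))" by (rule prod_add) simp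
  also have "\<dots> = (\<Sum>X\<in>Pow {..<k}. n_class k m X)" unfolding n_class_def by simp
  also have "\<dots> = n_class k m {} + (n_class k m {..<k} + (\<Sum>S\<in>G_vertices k. n_class k m S))"
    unfolding Pow_split(1)[OF k] using Pow_split(2,3)[OF k] finite_W by simp
  also have "n_class k m {} = (\<Prod>i<k. m i)" unfolding n_class_def by simp
  also have "n_class k m {..<k} = 1" unfolding n_class_def by simp
  finally show ?thesis by simp
qed

lemma card_W:
  assumes k: "k \<ge> 1"
  shows "card (G_vertices k) + 2 = 2 ^ k"
proof -
  have "2 ^ k = card (Pow {..<k})" by (simp add: card_Pow)
  also have "\<dots> = card (G_vertices k) + 2"
    unfolding Pow_split(1)[OF k] using Pow_split(2,3)[OF k] finite_W by simp
  finally show ?thesis by simp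
qed

end

theorem mainTheorem8:
  fixes k n :: nat and p m :: "nat \<Rightarrow> nat"
  assumes primes: "\<forall>i<k. prime (p i)"
    and incr: "\<forall>i j. i < j \<and> j < k \<longrightarrow> p i < p j"
    and mpos: "\<forall>i<k. m i > 0"
    and n_def: "n = (\<Prod>i<k. p i ^ m i)"
    and some_big: "\<exists>i<k. m i > 1"
  shows "mat_spectrum (noness_vertices n) (\<lambda>I K. if ess_adj n I K then 1 else 0)
     = replicate_mset
         (nat (((\<Prod>i<k. int (m i) + 1) - 2) - ((\<Prod>i<k. int (m i)) - 1) - (2 ^ k - 2))) 0
       + mat_spectrum (G_vertices k) (C_A k m)"
proof -
  interpret pf k p m n using primes incr mpos n_def by unfold_locales
  obtain j0 where j0: "j0 < k" "m j0 > 1" using some_big by blast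
  have k1: "k \<ge> 1" using j0 by simp
  have "multiplicity (p j0) n = m j0" using mult_phi_p[OF j0(1)] n_phi by simp
  hence "n \<noteq> 1" using j0 by auto
  hence n1: "1 < n" using n_pos by simp
  define V where "V = noness_vertices n"
  define W where "W = G_vertices k"
  define B :: "nat set \<Rightarrow> nat set \<Rightarrow> real" where "B S S' = (if S \<inter> S' = {} then 1 else 0)" for S S'
  define CC where "CC = (\<lambda>w w'. B w w' * sqrt (real (n_class k m w * n_class k m w')))"
  have Acong: "index_mat V (\<lambda>I K. if ess_adj n I K then 1 else 0) = index_mat V (\<lambda>v v'. B (Xi v) (Xi v'))"
    unfolding V_def by (rule index_mat_cong[OF finite_V]) (simp add: B_def adj_iff[OF n1])
  have Ccong: "index_mat W (C_A k m) = index_mat W CC"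
    unfolding W_def CC_def by (rule index_mat_cong[OF finite_W]) (auto simp: C_A_def B_def G_vertices_def)
  have bl: "char_poly (index_mat V (\<lambda>v v'. B (Xi v) (Xi v'))) * [:0,1:]^card W
       = char_poly (index_mat W CC) * [:0,1:]^card V"
    unfolding V_def W_def CC_def
    by (rule blowup[OF finite_V finite_W Xi_W[OF n1]]) (auto simp: fiber[OF n1] n_class_pos)
  define chA where "chA = char_poly (index_mat V (\<lambda>I K. if ess_adj n I K then 1 else 0))"
  define chC where "chC = char_poly (index_mat W (C_A k m))"
  define X :: "complex poly" where "X = [:0,1:]"
  have WV: "card W \<le> card V"
  proof -
    have "card W = (\<Sum>S\<in>W. 1)" by simp
    also have "\<dots> \<le> (\<Sum>S\<in>W. n_class k m S)" by (rule sum_mono) (use n_class_pos in \<open>simp add: Suc_le_eq\<close>)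
    also have "\<dots> = card V" unfolding V_def W_def using card_V[OF n1] by simp
    finally show ?thesis .
  qed
  have "chA * X ^ card W = (chC * X ^ (card V - card W)) * X ^ card W"
    using bl WV unfolding chA_def chC_def X_def Acong Ccong
    by (simp add: mult.assoc power_add[symmetric])
  moreover have "X ^ card W \<noteq> 0" unfolding X_def by simp
  ultimately have chA: "chA = chC * X ^ (card V - card W)" by (metis mult_right_cancel)
  have "index_mat W (C_A k m) \<in> carrier_mat (card W) (card W)" unfolding index_mat_def Let_def by simp
  hence "coeff chC (card W) = 1" unfolding chC_def using degree_monic_char_poly by blast
  hence chC0: "chC \<noteq> 0" by auto
  have X0: "X ^ (card V - card W) \<noteq> 0" unfolding X_def by simp
  have pX: "proots (X ^ j) = replicate_mset j 0" for j
    unfolding X_def proots_power using proots_linear_factor[of "0::complex"] by (simp add: repeat_mset_replicate_mset)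
  have num: "nat (((\<Prod>i<k. int (m i) + 1) - 2) - ((\<Prod>i<k. int (m i)) - 1) - (2 ^ k - 2)) = card V - card W"
  proof -
    have s: "int (\<Sum>S\<in>W. n_class k m S) + int (\<Prod>i<k. m i) + 1 = int (\<Prod>i<k. m i + 1)"
      using sum_W[OF k1] unfolding W_def by (metis of_nat_1 of_nat_add)
    have c: "int (card W) + 2 = 2 ^ k" using card_W[OF k1] unfolding W_def by (metis of_nat_add of_nat_numeral of_nat_power)
    have v: "card V = (\<Sum>S\<in>W. n_class k m S)" unfolding V_def W_def using card_V[OF n1] by simp
    have p1: "(\<Prod>i<k. int (m i) + 1) = int (\<Prod>i<k. m i + 1)" by (simp add: of_nat_prod add.commute)
    have p2: "(\<Prod>i<k. int (m i)) = int (\<Prod>i<k. m i)" by (simp add: of_nat_prod)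
    have "((\<Prod>i<k. int (m i) + 1) - 2) - ((\<Prod>i<k. int (m i)) - 1) - (2 ^ k - 2) = int (card V) - int (card W)"
      unfolding p1 p2 using s c v by linarith
    thus ?thesis using WV by simp
  qed
  have "mat_spectrum (noness_vertices n) (\<lambda>I K. if ess_adj n I K then 1 else 0) = proots chA"
    unfolding mat_spectrum_def chA_def V_def ..
  also have "\<dots> = proots chC + proots (X ^ (card V - card W))" unfolding chA by (rule proots_mult[OF chC0 X0])
  also have "\<dots> = replicate_mset (card V - card W) 0 + mat_spectrum (G_vertices k) (C_A k m)"
    unfolding pX chC_def mat_spectrum_def W_def by (simp add: add.commute)
  finally show ?thesis unfolding num .
qed


end
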